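(* For any valid scheme (satisfying (C1)–(C8)) with $N\ge2$, $K\ge2$, \[ \frac{N}{N-1}\,\rho_U+N\rho_S\ \ge\ \frac{N}{N-1}. \]
   Context: Model (SPIR with user-side common randomness). There are $N\ge1$ non-colluding databases, each storing the same $K\ge2$ messages $W_1,\dots,W_K$. Each message consists of $L$ i.i.d. symbols uniform over a sufficiently large finite field $\mathbb{F}_q$; entropies are in $q$-ary units, so $H(W_k)=L$ and $H(W_{1:K})=KL$. The databases share server-side common randomness $\mathcal{R}_S$, unknown to the user. The user holds user-side common randomness $\mathcal{R}_U$, a subset of the components of $\mathcal{R}_S$, unknown to the databases except for its size (uniform over subsets of given cardinality). $\mathcal{F}$ is the user's retrieval-strategy randomness. To retrieve $W_k$ the user sends $Q_n^{[k,\mathcal{R}_U]}$ to database $n$, receiving $A_n^{[k,\mathcal{R}_U]}$; $W_{\bar k}=\{W_j:j\ne k\}$. A valid scheme satisfies for all $k,n,\mathcal{R}_U$: (C1) $I(W_{1:K};k,\mathcal{F},\mathcal{R}_S,\mathcal{R}_U)=0$; (C2) $I(Q_{1:N}^{[k,\mathcal{R}_U]};W_{1:K},\mathcal{R}_S\setminus\mathcal{R}_U)=0$; (C3) $H(Q_{1:N}^{[k,\mathcal{R}_U]}\mid\mathcal{F})=0$; (C4) $H(A_n^{[k,\mathcal{R}_U]}\mid Q_n^{[k,\mathcal{R}_U]},W_{1:K},\mathcal{R}_S)=0$; (C5) $H(W_k\mid\mathcal{F},A_{1:N}^{[k,\mathcal{R}_U]},\mathcal{R}_U)=0$; (C6)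 user privacy: for all $k,k',n,\mathcal{R}_U$ there is $\mathcal{R}_U'$ with $H(\mathcal{R}_U')=H(\mathcal{R}_U)$ and $(Q_n^{[k,\mathcal{R}_U]},A_n^{[k,\mathcal{R}_U]},W_{1:K},\mathcal{R}_S)\sim(Q_n^{[k',\mathcal{R}_U']},A_n^{[k',\mathcal{R}_U']},W_{1:K},\mathcal{R}_S)$; (C7) $I(W_{\bar k};\mathcal{F},A_{1:N}^{[k,\mathcal{R}_U]},\mathcal{R}_U)=0$; (C8) $I(\mathcal{R}_S\setminus\mathcal{R}_U;\mathcal{F},A_{1:N}^{[k,\mathcal{R}_U]},W_k,\mathcal{R}_U)=0$. $\rho_S=H(\mathcal{R}_S)/L$, $\rho_U=H(\mathcal{R}_U)/L$. *)

theory Defs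
  imports "HOL-Probability.Probability"
begin

definition ent :: "real \<Rightarrow> 'w pmf \<Rightarrow> ('w \<Rightarrow> 'a) \<Rightarrow> real" where
  "ent b M X = - (\<Sum>x \<in> set_pmf (map_pmf X M).
       pmf (map_pmf X M) x * log b (pmf (map_pmf X M) x))"

definition cent :: "real \<Rightarrow> 'w pmf \<Rightarrow> ('w \<Rightarrow> 'a) \<Rightarrow> ('w \<Rightarrow> 'b) \<Rightarrow> real" where
  "cent b M X Y = ent b M (\<lambda>\<omega>. (X \<omega>, Y \<omega>)) - ent b M Y"

definition minf :: "real \<Rightarrow> 'w pmf \<Rightarrow> ('w \<Rightarrow> 'a) \<Rightarrow> ('w \<Rightarrow> 'b) \<Rightarrow> real" where
  "minf b M X Y = ent b M X + ent b M Y - ent b M (\<lambda>\<omega>. (X \<omega>, Y \<omega>))"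

definition comps :: "('w \<Rightarrow> nat \<Rightarrow> 'r) \<Rightarrow> nat set \<Rightarrow> 'w \<Rightarrow> (nat \<Rightarrow> 'r)" where
  "comps RS S = (\<lambda>\<omega>. restrict (RS \<omega>) S)"

(* all messages W_{1:K} (indexed 0..K-1) *)
definition Wall :: "nat \<Rightarrow> (nat \<Rightarrow> 'w \<Rightarrow> 'm) \<Rightarrow> 'w \<Rightarrow> 'm list" where
  "Wall K W = (\<lambda>\<omega>. map (\<lambda>j. W j \<omega>) [0..<K])"

definition Wbar :: "nat \<Rightarrow> nat \<Rightarrow> (nat \<Rightarrow> 'w \<Rightarrow> 'm) \<Rightarrow> 'w \<Rightarrow> 'm list" where
  "Wbar K k W = (\<lambda>\<omega>. map (\<lambda>j. W j \<omega>) (filter (\<lambda>j. j \<noteq> k) [0..<K]))"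

definition allN :: "nat \<Rightarrow> (nat \<Rightarrow> 'w \<Rightarrow> 'x) \<Rightarrow> 'w \<Rightarrow> 'x list" where
  "allN N X = (\<lambda>\<omega>. map (\<lambda>n. X n \<omega>) [0..<N])"

definition msgs :: "nat \<Rightarrow> nat \<Rightarrow> 'f list list set" where
  "msgs K L = {ws. length ws = K \<and> (\<forall>w\<in>set ws. length w = L)}"

(* admissible user-side randomness: index subsets of size u of the m components *)
definition adm :: "nat \<Rightarrow> nat \<Rightarrow> nat set set" where
  "adm m u = {S. S \<subseteq> {..<m} \<and> card S = u}"

(* Conditions (C1)-(C8), entropies in q-ary units with q = CARD('f).
   Q n k S / A n k S : query to / answer of database n when retrieving W_k
   with user-side randomness R_U = comps RS S. *)
definition valid_scheme ::
  "'w pmf \<Rightarrow> nat \<Rightarrow> nat \<Rightarrow> nat \<Rightarrow> nat \<Rightarrow> (nat \<Rightarrow> 'w \<Rightarrow> 'f::finite list)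
   \<Rightarrow> ('w \<Rightarrow> nat \<Rightarrow> 'r) \<Rightarrow> ('w \<Rightarrow> 'g)
   \<Rightarrow> (nat \<Rightarrow> nat \<Rightarrow> nat set \<Rightarrow> 'w \<Rightarrow> 'q) \<Rightarrow> (nat \<Rightarrow> nat \<Rightarrow> nat set \<Rightarrow> 'w \<Rightarrow> 'a) \<Rightarrow> bool"
where
  "valid_scheme M N K m u W RS F Q A \<longleftrightarrow>
    (let b = real CARD('f); RSall = comps RS {..<m} in
     \<forall>k<K. \<forall>S\<in>adm m u.
      let RU = comps RS S; Rrest = comps RS ({..<m} - S);
          Qs = allN N (\<lambda>n. Q n k S); As = allN N (\<lambda>n. A n k S) in
      \<comment> \<open>C1\<close>
      minf b M (Wall K W) (\<lambda>\<omega>. (F \<omega>, RSall \<omega>, RU \<omega>)) = 0 \<and>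
      \<comment> \<open>C2\<close>
      minf b M Qs (\<lambda>\<omega>. (Wall K W \<omega>, Rrest \<omega>)) = 0 \<and>
      \<comment> \<open>C3\<close>
      cent b M Qs F = 0 \<and>
      \<comment> \<open>C4\<close>
      (\<forall>n<N. cent b M (A n k S) (\<lambda>\<omega>. (Q n k S \<omega>, Wall K W \<omega>, RSall \<omega>)) = 0) \<and>
      \<comment> \<open>C5\<close>
      cent b M (W k) (\<lambda>\<omega>. (F \<omega>, As \<omega>, RU \<omega>)) = 0 \<and>
      \<comment> \<open>C6\<close>
      (\<forall>k'<K. \<forall>n<N. \<exists>S'\<in>adm m u.
          ent b M (comps RS S') = ent b M RU \<and>
          map_pmf (\<lambda>\<omega>. (Q n k S \<omega>, A n k S \<omega>, Wall K W \<omega>, RSall \<omega>)) M =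
          map_pmf (\<lambda>\<omega>. (Q n k' S' \<omega>, A n k' S' \<omega>, Wall K W \<omega>, RSall \<omega>)) M) \<and>
      \<comment> \<open>C7\<close>
      minf b M (Wbar K k W) (\<lambda>\<omega>. (F \<omega>, As \<omega>, RU \<omega>)) = 0 \<and>
      \<comment> \<open>C8\<close>
      minf b M Rrest (\<lambda>\<omega>. (F \<omega>, As \<omega>, W k \<omega>, RU \<omega>)) = 0)"

end

theory Submission
  imports Defs
begin


context
  fixes M :: "'w pmf"
  assumes fin: "finite (set_pmf M)"
begin

lemma pushfw:
  "(\<Sum>x\<in>set_pmf (map_pmf X M). pmf (map_pmf X M) x * g x) = (\<Sum>\<omega>\<in>set_pmf M. pmf M \<omega> * g (X \<omega>))"
proof -
  have "(\<Sum>\<omega>\<in>set_pmf M. pmf M \<omega> * g (X \<omega>)) =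
     (\<Sum>x\<in>X ` set_pmf M. \<Sum>\<omega>\<in>{\<omega>\<in>set_pmf M. X \<omega> = x}. pmf M \<omega> * g (X \<omega>))"
    using fin by (rule sum.image_gen)
  also have "\<dots> = (\<Sum>x\<in>X ` set_pmf M. pmf (map_pmf X M) x * g x)"
  proof (rule sum.cong[OF refl])
    fix x assume "x \<in> X ` set_pmf M"
    have "(\<Sum>\<omega>\<in>{\<omega>\<in>set_pmf M. X \<omega> = x}. pmf M \<omega> * g (X \<omega>)) = (\<Sum>\<omega>\<in>{\<omega>\<in>set_pmf M. X \<omega> = x}. pmf M \<omega>) * g x"
      by (simp add: sum_distrib_right)
    also have "(\<Sum>\<omega>\<in>{\<omega>\<in>set_pmf M. X \<omega> = x}. pmf M \<omega>) = pmf (map_pmf X M) x"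
    proof -
      have "pmf (map_pmf X M) x = measure M (X -` {x} \<inter> set_pmf M)"
        by (simp add: pmf_map measure_Int_set_pmf)
      also have "X -` {x} \<inter> set_pmf M = {\<omega>\<in>set_pmf M. X \<omega> = x}" by auto
      finally show ?thesis using fin by (simp add: measure_measure_pmf_finite)
    qed
    finally show "(\<Sum>\<omega>\<in>{\<omega>\<in>set_pmf M. X \<omega> = x}. pmf M \<omega> * g (X \<omega>)) = pmf (map_pmf X M) x * g x" .
  qed
  finally show ?thesis by simp
qed

lemma ent_expect:
  "ent b M X = - (\<Sum>\<omega>\<in>set_pmf M. pmf M \<omega> * log b (pmf (map_pmf X M) (X \<omega>)))"
  unfolding ent_def by (subst pushfw) simp

lemma pmf_map_class:
  "pmf (map_pmf X M) (X \<omega>) = measure M {\<omega>'\<in>set_pmf M. X \<omega>' = X \<omega>}"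
proof -
  have "pmf (map_pmf X M) (X \<omega>) = measure M (X -` {X \<omega>} \<inter> set_pmf M)"
    by (simp add: pmf_map measure_Int_set_pmf)
  also have "X -` {X \<omega>} \<inter> set_pmf M = {\<omega>'\<in>set_pmf M. X \<omega>' = X \<omega>}" by auto
  finally show ?thesis .
qed

lemma ent_cong:
  assumes "\<And>\<omega> \<omega>'. \<omega> \<in> set_pmf M \<Longrightarrow> \<omega>' \<in> set_pmf M \<Longrightarrow> (X \<omega>' = X \<omega>) = (Y \<omega>' = Y \<omega>)"
  shows "ent b M X = ent b M Y"
  unfolding ent_expect pmf_map_class
proof (rule arg_cong[where f=uminus], rule sum.cong[OF refl])
  fix \<omega> assume w: "\<omega> \<in> set_pmf M"
  have "{\<omega>'\<in>set_pmf M. X \<omega>' = X \<omega>} = {\<omega>'\<in>set_pmf M. Y \<omega>' = Y \<omega>}"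
    using assms w by blast
  then show "pmf M \<omega> * log b (measure M {\<omega>'\<in>set_pmf M. X \<omega>' = X \<omega>}) = pmf M \<omega> * log b (measure M {\<omega>'\<in>set_pmf M. Y \<omega>' = Y \<omega>})"
    by simp
qed

lemma ent_mono:
  assumes b: "1 < b"
  shows "ent b M Y \<le> ent b M (\<lambda>\<omega>. (X \<omega>, Y \<omega>))"
  unfolding ent_expect pmf_map_class neg_le_iff_le
proof (rule sum_mono)
  fix \<omega> assume w: "\<omega> \<in> set_pmf M"
  have p1: "0 < measure M {\<omega>'\<in>set_pmf M. (X \<omega>', Y \<omega>') = (X \<omega>, Y \<omega>)}"
    using w by (intro measure_pmf_posI) auto
  have "measure M {\<omega>'\<in>set_pmf M. (X \<omega>', Y \<omega>') = (X \<omega>, Y \<omega>)} \<le> measure M {\<omega>'\<in>set_pmf M. Y \<omega>' = Y \<omega>}"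
    by (rule measure_pmf.finite_measure_mono) auto
  then have "log b (measure M {\<omega>'\<in>set_pmf M. (X \<omega>', Y \<omega>') = (X \<omega>, Y \<omega>)}) \<le> log b (measure M {\<omega>'\<in>set_pmf M. Y \<omega>' = Y \<omega>})"
    using p1 b by simp
  moreover have "pmf (map_pmf (\<lambda>\<omega>. (X \<omega>, Y \<omega>)) M) (X \<omega>, Y \<omega>) = measure M {\<omega>'\<in>set_pmf M. (X \<omega>', Y \<omega>') = (X \<omega>, Y \<omega>)}"
    using pmf_map_class[of "\<lambda>\<omega>. (X \<omega>, Y \<omega>)" \<omega>] by simp
  ultimately
  show "pmf M \<omega> * log b (pmf (map_pmf (\<lambda>\<omega>. (X \<omega>, Y \<omega>)) M) (X \<omega>, Y \<omega>)) \<le> pmf M \<omega> * log b (measure M {\<omega>'\<in>set_pmf M. Y \<omega>' = Y \<omega>})"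
    by (simp add: mult_left_mono)
qed

lemma sm_closed:
  assumes b: "1 < b" and w0: "w0 \<in> set_pmf M"
    and cl: "\<And>\<omega>. \<omega> \<notin> set_pmf M \<Longrightarrow> X \<omega> = X w0 \<and> Y \<omega> = Y w0 \<and> Z \<omega> = Z w0"
  shows "ent b M (\<lambda>\<omega>. (X \<omega>, Y \<omega>, Z \<omega>)) + ent b M Z \<le> ent b M (\<lambda>\<omega>. (X \<omega>, Z \<omega>)) + ent b M (\<lambda>\<omega>. (Y \<omega>, Z \<omega>))"
proof -
  interpret information_space "measure_pmf M" b
    by (unfold_locales) (rule b)
  have img: "T ` UNIV = T ` set_pmf M" if "\<And>\<omega>. \<omega> \<notin> set_pmf M \<Longrightarrow> T \<omega> = T w0" for T :: "'w \<Rightarrow> 'z"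
    using that w0 by (auto intro: image_eqI)
  have sf: "simple_function (measure_pmf M) T" if "\<And>\<omega>. \<omega> \<notin> set_pmf M \<Longrightarrow> T \<omega> = T w0" for T :: "'w \<Rightarrow> 'z"
    unfolding simple_function_def using img[of T, OF that] fin by simp
  have sX: "simple_function (measure_pmf M) X" using sf cl by blast
  have sY: "simple_function (measure_pmf M) Y" using sf cl by blast
  have sZ: "simple_function (measure_pmf M) Z" using sf cl by blast
  note sd = measure_pmf.simple_distributedI[OF _ measure_nonneg refl]
  have Pz: "simple_distributed (measure_pmf M) Z (\<lambda>x. pmf (map_pmf Z M) x)"
    using sd[OF sZ] by (simp add: pmf_map)
  have Pyz: "simple_distributed (measure_pmf M) (\<lambda>x. (Y x, Z x)) (\<lambda>x. pmf (map_pmf (\<lambda>x. (Y x, Z x)) M) x)"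
    using sd[OF simple_function_Pair[OF sY sZ]] by (simp add: pmf_map)
  have Pxz: "simple_distributed (measure_pmf M) (\<lambda>x. (X x, Z x)) (\<lambda>x. pmf (map_pmf (\<lambda>x. (X x, Z x)) M) x)"
    using sd[OF simple_function_Pair[OF sX sZ]] by (simp add: pmf_map)
  have Pxyz: "simple_distributed (measure_pmf M) (\<lambda>x. (X x, Y x, Z x)) (\<lambda>x. pmf (map_pmf (\<lambda>x. (X x, Y x, Z x)) M) x)"
    using sd[OF simple_function_Pair[OF sX simple_function_Pair[OF sY sZ]]] by (simp add: pmf_map)
  have "0 \<le> (\<Sum>(x, y, z)\<in>(\<lambda>x. (X x, Y x, Z x))`space M.
     pmf (map_pmf (\<lambda>x. (X x, Y x, Z x)) M) (x, y, z) * log b (pmf (map_pmf (\<lambda>x. (X x, Y x, Z x)) M) (x, y, z) /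
       (pmf (map_pmf (\<lambda>x. (X x, Z x)) M) (x, z) * (pmf (map_pmf (\<lambda>x. (Y x, Z x)) M) (y,z) / pmf (map_pmf Z M) z))))"
    using conditional_mutual_information_nonneg[OF sX sY sZ] conditional_mutual_information_eq[OF Pz Pyz Pxz Pxyz]
    by simp
  also have "(\<lambda>x. (X x, Y x, Z x))`space M = set_pmf (map_pmf (\<lambda>x. (X x, Y x, Z x)) M)"
    using img[of "\<lambda>x. (X x, Y x, Z x)"] cl by simp
  finally have "0 \<le> (\<Sum>t\<in>set_pmf (map_pmf (\<lambda>x. (X x, Y x, Z x)) M).
     pmf (map_pmf (\<lambda>x. (X x, Y x, Z x)) M) t * (\<lambda>(x,y,z). log b (pmf (map_pmf (\<lambda>x. (X x, Y x, Z x)) M) (x, y, z) /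
       (pmf (map_pmf (\<lambda>x. (X x, Z x)) M) (x, z) * (pmf (map_pmf (\<lambda>x. (Y x, Z x)) M) (y,z) / pmf (map_pmf Z M) z)))) t)"
    by (simp add: case_prod_beta)
  also have "\<dots> = (\<Sum>\<omega>\<in>set_pmf M. pmf M \<omega> * log b (pmf (map_pmf (\<lambda>x. (X x, Y x, Z x)) M) (X \<omega>, Y \<omega>, Z \<omega>) /
       (pmf (map_pmf (\<lambda>x. (X x, Z x)) M) (X \<omega>, Z \<omega>) * (pmf (map_pmf (\<lambda>x. (Y x, Z x)) M) (Y \<omega>, Z \<omega>) / pmf (map_pmf Z M) (Z \<omega>)))))"
    by (subst pushfw) simp
  also have "\<dots> = (\<Sum>\<omega>\<in>set_pmf M. pmf M \<omega> * log b (pmf (map_pmf (\<lambda>x. (X x, Y x, Z x)) M) (X \<omega>, Y \<omega>, Z \<omega>)))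
      - (\<Sum>\<omega>\<in>set_pmf M. pmf M \<omega> * log b (pmf (map_pmf (\<lambda>x. (X x, Z x)) M) (X \<omega>, Z \<omega>)))
      - (\<Sum>\<omega>\<in>set_pmf M. pmf M \<omega> * log b (pmf (map_pmf (\<lambda>x. (Y x, Z x)) M) (Y \<omega>, Z \<omega>)))
      + (\<Sum>\<omega>\<in>set_pmf M. pmf M \<omega> * log b (pmf (map_pmf Z M) (Z \<omega>)))"
    unfolding sum_subtractf[symmetric] sum.distrib[symmetric]
  proof (rule sum.cong[OF refl])
    fix \<omega> assume w: "\<omega> \<in> set_pmf M"
    have p: "0 < pmf (map_pmf T M) (T \<omega>)" for T :: "'w \<Rightarrow> 'z"
      using w by (simp add: pmf_positive)
    have p1: "0 < pmf (map_pmf (\<lambda>x. (X x, Y x, Z x)) M) (X \<omega>, Y \<omega>, Z \<omega>)" using p[of "\<lambda>x. (X x, Y x, Z x)"] by simp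
    have p2: "0 < pmf (map_pmf (\<lambda>x. (X x, Z x)) M) (X \<omega>, Z \<omega>)" using p[of "\<lambda>x. (X x, Z x)"] by simp
    have p3: "0 < pmf (map_pmf (\<lambda>x. (Y x, Z x)) M) (Y \<omega>, Z \<omega>)" using p[of "\<lambda>x. (Y x, Z x)"] by simp
    have p4: "0 < pmf (map_pmf Z M) (Z \<omega>)" using p[of Z] by simp
    show "pmf M \<omega> * log b (pmf (map_pmf (\<lambda>x. (X x, Y x, Z x)) M) (X \<omega>, Y \<omega>, Z \<omega>) /
       (pmf (map_pmf (\<lambda>x. (X x, Z x)) M) (X \<omega>, Z \<omega>) * (pmf (map_pmf (\<lambda>x. (Y x, Z x)) M) (Y \<omega>, Z \<omega>) / pmf (map_pmf Z M) (Z \<omega>)))) =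
      pmf M \<omega> * log b (pmf (map_pmf (\<lambda>x. (X x, Y x, Z x)) M) (X \<omega>, Y \<omega>, Z \<omega>)) -
      pmf M \<omega> * log b (pmf (map_pmf (\<lambda>x. (X x, Z x)) M) (X \<omega>, Z \<omega>)) -
      pmf M \<omega> * log b (pmf (map_pmf (\<lambda>x. (Y x, Z x)) M) (Y \<omega>, Z \<omega>)) +
      pmf M \<omega> * log b (pmf (map_pmf Z M) (Z \<omega>))"
      using p1 p2 p3 p4 b by (simp add: log_divide log_mult algebra_simps)
  qed
  finally show ?thesis
    unfolding ent_expect[of b X] ent_expect[of b Z] ent_expect[of b "\<lambda>\<omega>. (X \<omega>, Z \<omega>)"]
      ent_expect[of b "\<lambda>\<omega>. (Y \<omega>, Z \<omega>)"] ent_expect[of b "\<lambda>\<omega>. (X \<omega>, Y \<omega>, Z \<omega>)"]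
    by simp
qed


lemma ent_sm:
  assumes b: "1 < b"
  shows "ent b M (\<lambda>\<omega>. (X \<omega>, Y \<omega>, Z \<omega>)) + ent b M Z \<le> ent b M (\<lambda>\<omega>. (X \<omega>, Z \<omega>)) + ent b M (\<lambda>\<omega>. (Y \<omega>, Z \<omega>))"
proof -
  obtain w0 where w0: "w0 \<in> set_pmf M" using set_pmf_not_empty by fast
  define X' where "X' \<omega> = (if \<omega> \<in> set_pmf M then X \<omega> else X w0)" for \<omega>
  define Y' where "Y' \<omega> = (if \<omega> \<in> set_pmf M then Y \<omega> else Y w0)" for \<omega>
  define Z' where "Z' \<omega> = (if \<omega> \<in> set_pmf M then Z \<omega> else Z w0)" for \<omega>
  have "ent b M (\<lambda>\<omega>. (X' \<omega>, Y' \<omega>, Z' \<omega>)) + ent b M Z' \<le> ent b M (\<lambda>\<omega>. (X' \<omega>, Z' \<omega>)) + ent b M (\<lambda>\<omega>. (Y' \<omega>, Z' \<omega>))"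
    by (rule sm_closed[OF b w0]) (simp add: X'_def Y'_def Z'_def w0)
  moreover have "ent b M (\<lambda>\<omega>. (X' \<omega>, Y' \<omega>, Z' \<omega>)) = ent b M (\<lambda>\<omega>. (X \<omega>, Y \<omega>, Z \<omega>))"
    by (rule ent_cong) (simp add: X'_def Y'_def Z'_def)
  moreover have "ent b M Z' = ent b M Z"
    by (rule ent_cong) (simp add: X'_def Y'_def Z'_def)
  moreover have "ent b M (\<lambda>\<omega>. (X' \<omega>, Z' \<omega>)) = ent b M (\<lambda>\<omega>. (X \<omega>, Z \<omega>))"
    by (rule ent_cong) (simp add: X'_def Y'_def Z'_def)
  moreover have "ent b M (\<lambda>\<omega>. (Y' \<omega>, Z' \<omega>)) = ent b M (\<lambda>\<omega>. (Y \<omega>, Z \<omega>))"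
    by (rule ent_cong) (simp add: X'_def Y'_def Z'_def)
  ultimately show ?thesis by simp
qed

lemma ent_const: "ent b M (\<lambda>\<omega>. c) = 0"
  unfolding ent_def by simp

end

definition rv :: "('w \<Rightarrow> 'x) \<Rightarrow> 'w \<Rightarrow> 'w \<Rightarrow> bool" where
  "rv X = (\<lambda>\<omega> \<omega>'. X \<omega> = X \<omega>')"

definition EQ :: "('w \<Rightarrow> 'w \<Rightarrow> bool) \<Rightarrow> bool" where
  "EQ a \<longleftrightarrow> (\<forall>x y. a x y = (a x = a y))"

lemma EQ_rv[simp]: "EQ (rv X)"
  unfolding EQ_def rv_def by (auto simp: fun_eq_iff)

lemma EQ_D: "EQ a \<Longrightarrow> a x y = (a x = a y)"
  unfolding EQ_def by blast

lemma EQ_inf[simp]: assumes "EQ a" "EQ c" shows "EQ (inf a c)"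
  unfolding EQ_def
proof (intro allI)
  fix x y
  have r: "a z z" "c z z" for z using EQ_D[OF assms(1), of z z] EQ_D[OF assms(2), of z z] by auto
  have s: "a x y = a y x" "c x y = c y x" using EQ_D[OF assms(1)] EQ_D[OF assms(2)] by auto
  show "inf a c x y = (inf a c x = inf a c y)"
  proof
    assume "inf a c x y"
    then have "a x = a y" "c x = c y" using EQ_D[OF assms(1)] EQ_D[OF assms(2)] by auto
    then show "inf a c x = inf a c y" by (simp add: fun_eq_iff)
  next
    assume "inf a c x = inf a c y"
    then have "inf a c x x = inf a c y x" by simp
    then have "a y x" "c y x" using r[of x] by auto
    then show "inf a c x y" using s by simp
  qed
qed

lemma EQ_top[simp]: "EQ top"
  unfolding EQ_def by auto

lemma rv_pair: "rv (\<lambda>\<omega>. (X \<omega>, Y \<omega>)) = inf (rv X) (rv Y)"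
  unfolding rv_def by (auto simp: fun_eq_iff)

context
  fixes M :: "'w pmf" and b :: real
  assumes fin: "finite (set_pmf M)" and b: "1 < b"
begin

lemma ent_rv: "ent b M (rv X) = ent b M X"
  by (rule ent_cong[OF fin]) (auto simp: rv_def fun_eq_iff)

lemma EQ_D': "EQ a \<Longrightarrow> (a y = a x) = a x y"
  unfolding EQ_def by metis

lemma ent_inf2: assumes A: "EQ a" "EQ c" shows "ent b M (inf a c) = ent b M (\<lambda>\<omega>. (a \<omega>, c \<omega>))"
proof (rule ent_cong[OF fin])
  fix \<omega> \<omega>'
  show "(inf a c \<omega>' = inf a c \<omega>) = ((a \<omega>', c \<omega>') = (a \<omega>, c \<omega>))"
    unfolding prod.inject EQ_D'[OF A(1), of \<omega>' \<omega>] EQ_D'[OF A(2), of \<omega>' \<omega>] EQ_D'[OF EQ_inf[OF A], of \<omega>' \<omega>]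
    by simp
qed

lemma ent_inf3: assumes A: "EQ a" "EQ bb" "EQ c"
  shows "ent b M (inf (inf a bb) c) = ent b M (\<lambda>\<omega>. (a \<omega>, bb \<omega>, c \<omega>))"
proof (rule ent_cong[OF fin])
  fix \<omega> \<omega>'
  show "(inf (inf a bb) c \<omega>' = inf (inf a bb) c \<omega>) = ((a \<omega>', bb \<omega>', c \<omega>') = (a \<omega>, bb \<omega>, c \<omega>))"
    unfolding prod.inject EQ_D'[OF A(1), of \<omega>' \<omega>] EQ_D'[OF A(2), of \<omega>' \<omega>] EQ_D'[OF A(3), of \<omega>' \<omega>]
      EQ_D'[OF EQ_inf[OF EQ_inf[OF A(1) A(2)] A(3)], of \<omega>' \<omega>]
    by simp
qed

lemma H_mono: "EQ a \<Longrightarrow> EQ c \<Longrightarrow> ent b M c \<le> ent b M (inf a c)"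
  using ent_mono[OF fin b, of c a] ent_inf2 by simp

lemma H_sm: "EQ a \<Longrightarrow> EQ bb \<Longrightarrow> EQ c \<Longrightarrow>
   ent b M (inf (inf a bb) c) + ent b M c \<le> ent b M (inf a c) + ent b M (inf bb c)"
  using ent_sm[OF fin b, of a bb c] ent_inf2 ent_inf3 by simp

lemma H_top: "ent b M (top :: 'w \<Rightarrow> 'w \<Rightarrow> bool) = 0"
proof -
  have "(top :: 'w \<Rightarrow> 'w \<Rightarrow> bool) = (\<lambda>\<omega>. \<lambda>y. True)" by auto
  then show ?thesis using ent_const[OF fin, of b "\<lambda>y. True"] by metis
qed

lemma H_nonneg: "EQ a \<Longrightarrow> 0 \<le> ent b M a"
  using H_mono[of a top] H_top by simp

end


lemma card_B: "card {w :: 'f::finite list. length w = L} = CARD('f) ^ L"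
  using card_lists_length_eq[of "UNIV :: 'f set" L] by simp

lemma finite_B: "finite {w :: 'f::finite list. length w = L}"
  using finite_lists_length_eq[of "UNIV :: 'f set" L] by simp

lemma msgs_eq: "msgs K L = {ws. set ws \<subseteq> {w :: 'f::finite list. length w = L} \<and> length ws = K}"
  unfolding msgs_def by auto

lemma fiber_card:
  fixes x :: "'f::finite list"
  shows "card {ws \<in> msgs (Suc K) L. hd ws = x} = (if length x = L then CARD('f) ^ (L * K) else 0)"
proof (cases "length x = L")
  case True
  have "{ws \<in> msgs (Suc K) L. hd ws = x} = (Cons x) ` msgs K L"
  proof
    show "{ws \<in> msgs (Suc K) L. hd ws = x} \<subseteq> Cons x ` msgs K L"
    proof
      fix ws assume "ws \<in> {ws \<in> msgs (Suc K) L. hd ws = x}"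
      then have "length ws = Suc K" "\<forall>w\<in>set ws. length w = L" "hd ws = x" unfolding msgs_def by auto
      then obtain t where "ws = x # t" "length t = K" "\<forall>w\<in>set t. length w = L" by (cases ws) auto
      then show "ws \<in> Cons x ` msgs K L" unfolding msgs_def by auto
    qed
    show "Cons x ` msgs K L \<subseteq> {ws \<in> msgs (Suc K) L. hd ws = x}"
      using True unfolding msgs_def by auto
  qed
  then have "card {ws \<in> msgs (Suc K) L. hd ws = x} = card (msgs K L :: 'f list list set)"
    by (simp add: card_image)
  also have "\<dots> = CARD('f) ^ (L * K)"
    unfolding msgs_eq[where 'f='f] using card_lists_length_eq[OF finite_B[where 'f='f, of L], of K] card_B[where 'f='f, of L] by (simp add: power_mult)
  finally show ?thesis using True by simp
next
  case False
  have e: "{ws \<in> msgs (Suc K) L. hd ws = x} = {}"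
  proof (rule ccontr)
    assume "{ws \<in> msgs (Suc K) L. hd ws = x} \<noteq> {}"
    then obtain ws where "length ws = Suc K" "\<forall>w\<in>set ws. length w = L" "hd ws = x" unfolding msgs_def by auto
    then show False using False by (cases ws) auto
  qed
  show ?thesis unfolding e using False by simp
qed

lemma card_msgs: "card (msgs K L :: 'f::finite list list set) = CARD('f) ^ (L * K)"
  unfolding msgs_eq using card_lists_length_eq[OF finite_B[where 'f='f, of L], of K] card_B[where 'f='f, of L] by (simp add: power_mult)

lemma finite_msgs: "finite (msgs K L :: 'f::finite list list set)"
  unfolding msgs_eq using finite_lists_length_eq[OF finite_B[where 'f='f, of L], of K] by simp

lemma msgs_ne: "msgs K L \<noteq> ({} :: 'f::finite list list set)"
proof -
  have "replicate K (replicate L undefined) \<in> (msgs K L :: 'f list list set)"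
    unfolding msgs_def by auto
  then show ?thesis by blast
qed

lemma map_hd_unif:
  shows "map_pmf hd (pmf_of_set (msgs (Suc K) L :: 'f::finite list list set)) = pmf_of_set {w :: 'f list. length w = L}"
proof (rule pmf_eqI)
  fix x :: "'f list"
  have Bne: "{w :: 'f list. length w = L} \<noteq> {}" by (auto intro: exI[of _ "replicate L undefined"])
  have "pmf (map_pmf hd (pmf_of_set (msgs (Suc K) L))) x = measure (pmf_of_set (msgs (Suc K) L)) (hd -` {x})"
    by (simp add: pmf_map)
  also have "\<dots> = card (msgs (Suc K) L \<inter> hd -` {x}) / card (msgs (Suc K) L :: 'f list list set)"
    by (rule measure_pmf_of_set[OF msgs_ne[where 'f='f] finite_msgs[where 'f='f]])
  also have "msgs (Suc K) L \<inter> hd -` {x} = {ws \<in> msgs (Suc K) L. hd ws = x}" by auto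
  also have "real (card \<dots>) / card (msgs (Suc K) L :: 'f list list set) = (if length x = L then 1 / CARD('f) ^ L else 0)"
    unfolding fiber_card card_msgs by (simp add: power_add field_simps)
  also have "\<dots> = pmf (pmf_of_set {w :: 'f list. length w = L}) x"
    using pmf_of_set[OF Bne finite_B[where 'f='f, of L], of x] card_B[where 'f='f, of L] by (simp add: indicator_def)
  finally show "pmf (map_pmf hd (pmf_of_set (msgs (Suc K) L))) x = pmf (pmf_of_set {w :: 'f list. length w = L}) x" .
qed

lemma ent_unif:
  assumes "1 < CARD('f::finite)" and that: "map_pmf X M = pmf_of_set {w :: 'f list. length w = L}"
  shows "ent (real CARD('f)) M X = real L"
proof -
  define B where "B = {w :: 'f list. length w = L}"
  have Bne: "B \<noteq> {}" unfolding B_def by (auto intro: exI[of _ "replicate L undefined"])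
  have Bf: "finite B" unfolding B_def by (rule finite_B)
  have cB: "card B = CARD('f) ^ L" unfolding B_def by (rule card_B)
  have sB: "set_pmf (pmf_of_set B) = B" using Bne Bf by simp
  have pB: "pmf (pmf_of_set B) x = 1 / CARD('f) ^ L" if "x \<in> B" for x
    using Bne Bf that cB by simp
  have "ent (real CARD('f)) M X = - (\<Sum>x\<in>B. (1 / CARD('f) ^ L) * log (real CARD('f)) (1 / CARD('f) ^ L))"
    unfolding ent_def that B_def[symmetric] sB using pB by simp
  also have "\<dots> = real L"
    using Bne Bf assms(1) cB by (simp add: log_divide log_nat_power)
  finally show ?thesis .
qed



definition HH :: "'w pmf \<Rightarrow> real \<Rightarrow> ('w \<Rightarrow> 'w \<Rightarrow> bool) \<Rightarrow> real" where
  "HH M b a = ent b M a"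

context
  fixes M :: "'w pmf" and b :: real
  assumes fin: "finite (set_pmf M)" and b: "1 < b"
begin

lemma ent_HH: "ent b M X = HH M b (rv X)"
  unfolding HH_def by (rule ent_rv[OF fin b, symmetric])

lemma HH_sm: "EQ x \<Longrightarrow> EQ y \<Longrightarrow> EQ z \<Longrightarrow>
   HH M b (inf (inf x y) z) + HH M b z \<le> HH M b (inf x z) + HH M b (inf y z)"
  unfolding HH_def by (rule H_sm[OF fin b])

lemma HH_mono: "EQ x \<Longrightarrow> EQ z \<Longrightarrow> HH M b z \<le> HH M b (inf x z)"
  unfolding HH_def by (rule H_mono[OF fin b])

lemma HH_top: "HH M b top = 0"
  unfolding HH_def by (rule H_top[OF fin b])

lemma HH_sub: "EQ x \<Longrightarrow> EQ y \<Longrightarrow> HH M b (inf x y) \<le> HH M b x + HH M b y"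
  using HH_sm[of x y top] HH_top by simp

lemma det_ext: assumes "EQ x" "EQ y" "EQ z" "HH M b (inf x y) = HH M b y"
  shows "HH M b (inf x (inf y z)) = HH M b (inf y z)"
proof -
  have 1: "HH M b (inf (inf x z) y) + HH M b y \<le> HH M b (inf x y) + HH M b (inf z y)"
    using assms by (intro HH_sm) auto
  have 2: "HH M b (inf z y) \<le> HH M b (inf x (inf z y))"
    using assms by (intro HH_mono) auto
  show ?thesis using 1 2 assms(4) by ((simp only: inf_aci)?; linarith?)
qed

lemma mi_mono: assumes "EQ x" "EQ x'" "EQ y" "EQ y'"
  shows "HH M b x + HH M b y - HH M b (inf x y) \<le>
         HH M b (inf x x') + HH M b (inf y y') - HH M b (inf (inf x x') (inf y y'))"
proof -
  have 1: "HH M b (inf (inf x' y) x) + HH M b x \<le> HH M b (inf x' x) + HH M b (inf y x)"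
    using assms by (intro HH_sm) auto
  have 2: "HH M b (inf (inf y' (inf x x')) y) + HH M b y \<le> HH M b (inf y' y) + HH M b (inf (inf x x') y)"
    using assms by (intro HH_sm) auto
  show ?thesis using 1 2 by ((simp only: inf_aci)?; linarith?)
qed

lemma mi_nonneg: "EQ x \<Longrightarrow> EQ y \<Longrightarrow> 0 \<le> HH M b x + HH M b y - HH M b (inf x y)"
  using HH_sub by fastforce

lemma sub_list:
  fixes G :: "nat \<Rightarrow> 'w \<Rightarrow> 'x"
  assumes c: "EQ c" and bd: "\<forall>j\<in>set js. HH M b (inf (rv (G j)) c) - HH M b c \<le> B"
  shows "HH M b (inf (rv (\<lambda>\<omega>. map (\<lambda>j. G j \<omega>) js)) c) - HH M b c \<le> real (length js) * B"
  using bd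
proof (induction js)
  case Nil
  have "rv (\<lambda>\<omega>. map (\<lambda>j. G j \<omega>) []) = top" by (simp add: rv_def fun_eq_iff)
  then show ?case by simp
next
  case (Cons j js)
  have e: "rv (\<lambda>\<omega>. map (\<lambda>j. G j \<omega>) (j # js)) = inf (rv (G j)) (rv (\<lambda>\<omega>. map (\<lambda>j. G j \<omega>) js))"
    by (simp add: rv_def fun_eq_iff)
  have 1: "HH M b (inf (inf (rv (G j)) (rv (\<lambda>\<omega>. map (\<lambda>j. G j \<omega>) js))) c) + HH M b c
     \<le> HH M b (inf (rv (G j)) c) + HH M b (inf (rv (\<lambda>\<omega>. map (\<lambda>j. G j \<omega>) js)) c)"
    using c by (intro HH_sm) auto
  have 2: "HH M b (inf (rv (G j)) c) - HH M b c \<le> B" using Cons.prems list.set_intros(1)[of j js] by blast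
  have 3: "HH M b (inf (rv (\<lambda>\<omega>. map (\<lambda>j. G j \<omega>) js)) c) - HH M b c \<le> real (length js) * B"
    using Cons.IH Cons.prems by (meson list.set_intros(2))
  have 4: "real (length (j # js)) * B = B + real (length js) * B" by (simp add: algebra_simps)
  show ?case unfolding e 4 using 1 2 3 by linarith
qed

lemma ent_map_eq: "map_pmf T M = map_pmf T' M \<Longrightarrow> ent b M (\<lambda>\<omega>. g (T \<omega>)) = ent b M (\<lambda>\<omega>. g (T' \<omega>))"
proof -
  assume e: "map_pmf T M = map_pmf T' M"
  have "map_pmf (\<lambda>\<omega>. g (T \<omega>)) M = map_pmf g (map_pmf T M)" by (simp add: map_pmf_comp)
  also have "\<dots> = map_pmf (\<lambda>\<omega>. g (T' \<omega>)) M" by (simp add: e map_pmf_comp)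
  finally show ?thesis unfolding ent_def by simp
qed

end


lemma allN_comp: "n < N \<Longrightarrow> rv (allN N G) = inf (rv (G n)) (rv (allN N G))"
proof -
  assume n: "n < N"
  have "G n x = G n y" if "allN N G x = allN N G y" for x y
  proof -
    have "allN N G x ! n = allN N G y ! n" using that by simp
    then show ?thesis using n by (simp add: allN_def)
  qed
  then have "rv (allN N G) x y = inf (rv (G n)) (rv (allN N G)) x y" for x y
    unfolding rv_def inf_fun_def inf_bool_def by blast
  then show ?thesis by (intro ext)
qed

lemma allN_split: "0 < N \<Longrightarrow> rv (allN N G) = inf (rv (G 0)) (rv (\<lambda>\<omega>. map (\<lambda>n. G n \<omega>) [1..<N]))"
  by (auto simp: rv_def fun_eq_iff allN_def upt_conv_Cons)

lemma Wall_split: "0 < K \<Longrightarrow> rv (Wall K W) = inf (rv (W 0)) (rv (Wbar K 0 W))"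
proof -
  assume K: "0 < K"
  have "filter (\<lambda>j. j \<noteq> 0) [0..<K] = [1..<K]"
    using K by (simp add: upt_conv_Cons filter_id_conv)
  then show ?thesis using K by (auto simp: rv_def fun_eq_iff Wall_def Wbar_def upt_conv_Cons)
qed

lemma Wbar1_w0: "1 < K \<Longrightarrow> rv (Wbar K 1 W) = inf (rv (W 0)) (rv (Wbar K 1 W))"
proof -
  assume K: "1 < K"
  have "filter (\<lambda>j. j \<noteq> 1) [0..<K] = 0 # filter (\<lambda>j. j \<noteq> 1) [1..<K]"
    using K by (simp add: upt_conv_Cons)
  then show ?thesis by (auto simp: rv_def fun_eq_iff Wbar_def)
qed

lemma restr_eq: "(restrict f A = restrict g A) \<longleftrightarrow> (\<forall>x\<in>A. f x = g x)"
proof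
  assume "restrict f A = restrict g A"
  then show "\<forall>x\<in>A. f x = g x" by (metis restrict_apply')
qed (rule restrict_ext, blast)

lemma comps_split: "S \<subseteq> {..<m} \<Longrightarrow> rv (comps RS {..<m}) = inf (rv (comps RS S)) (rv (comps RS ({..<m} - S)))"
proof -
  assume S: "S \<subseteq> {..<m}"
  have "(restrict (RS x) {..<m} = restrict (RS y) {..<m}) \<longleftrightarrow>
        (restrict (RS x) S = restrict (RS y) S \<and> restrict (RS x) ({..<m} - S) = restrict (RS y) ({..<m} - S))" for x y
    using S unfolding restr_eq by blast
  then have "rv (comps RS {..<m}) x y = inf (rv (comps RS S)) (rv (comps RS ({..<m} - S))) x y" for x y
    unfolding rv_def comps_def inf_fun_def inf_bool_def by blast
  then show ?thesis by (intro ext)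
qed

lemma hd_Wall: "0 < K \<Longrightarrow> hd (Wall K W \<omega>) = W 0 \<omega>"
  by (simp add: Wall_def upt_conv_Cons)



theorem lemma10:
  fixes M :: "'w pmf"
    and W :: "nat \<Rightarrow> 'w \<Rightarrow> ('f::{finite,field}) list"
    and RS :: "'w \<Rightarrow> nat \<Rightarrow> 'r"
    and F :: "'w \<Rightarrow> 'g"
    and Q :: "nat \<Rightarrow> nat \<Rightarrow> nat set \<Rightarrow> 'w \<Rightarrow> 'q"
    and A :: "nat \<Rightarrow> nat \<Rightarrow> nat set \<Rightarrow> 'w \<Rightarrow> 'a"
    and N K L m u :: nat and S :: "nat set"
  assumes "N \<ge> 2" and "K \<ge> 2" and "L \<ge> 1"
    and "finite (set_pmf M)"
    and "map_pmf (Wall K W) M = pmf_of_set (msgs K L)"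
    and "valid_scheme M N K m u W RS F Q A"
    and "S \<in> adm m u"
  shows "real N / (real N - 1) * (ent (real CARD('f)) M (comps RS S) / real L)
           + real N * (ent (real CARD('f)) M (comps RS {..<m}) / real L)
         \<ge> real N / (real N - 1)"
proof -
  have fin: "finite (set_pmf M)" by (rule assms(4))
  have two: "2 \<le> CARD('f)"
  proof -
    have "card {0::'f, 1} = 2" by simp
    moreover have "card {0::'f, 1} \<le> CARD('f)" by (rule card_mono) auto
    ultimately show ?thesis by simp
  qed
  have b1: "1 < real CARD('f)" using two by simp
  have k0: "0 < K" and k1: "1 < K" using assms(2) by auto
  have N0: "0 < N" using assms(1) by auto
  have Ssub: "S \<subseteq> {..<m}" using assms(7) by (simp add: adm_def)
  note V = assms(6)[unfolded valid_scheme_def Let_def, rule_format]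
  note V0 = V[OF k0 assms(7)]
  define H where "H = HH M (real CARD('f))"
  note eH = ent_HH[OF fin b1, folded H_def]
  note sm = HH_sm[OF fin b1, folded H_def]
  note mono = HH_mono[OF fin b1, folded H_def]
  note sub = HH_sub[OF fin b1, folded H_def]
  note dext = det_ext[OF fin b1, folded H_def]
  note mim = mi_mono[OF fin b1, folded H_def]
  note min = mi_nonneg[OF fin b1, folded H_def]
  define w0 where "w0 = rv (W 0)"
  define wb0 where "wb0 = rv (Wbar K 0 W)"
  define wb1 where "wb1 = rv (Wbar K 1 W)"
  define f where "f = rv F"
  define uu where "uu = rv (comps RS S)"
  define rr where "rr = rv (comps RS ({..<m} - S))"
  define q where "q = (\<lambda>n. rv (Q n 0 S))"
  define a where "a = (\<lambda>n. rv (A n 0 S))"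
  define ar where "ar = rv (\<lambda>\<omega>. map (\<lambda>n. A n 0 S \<omega>) [1..<N])"
  have EQs[simp]: "EQ w0" "EQ wb0" "EQ wb1" "EQ f" "EQ uu" "EQ rr" "EQ (q n)" "EQ (a n)" "EQ ar" for n
    by (simp_all add: w0_def wb0_def wb1_def f_def uu_def rr_def q_def a_def ar_def)
  have C1: "H (inf w0 wb0) + H (inf f (inf (inf uu rr) uu)) - H (inf (inf w0 wb0) (inf f (inf (inf uu rr) uu))) = 0"
    using V0 unfolding minf_def eH rv_pair Wall_split[OF k0] comps_split[OF Ssub]
    unfolding w0_def wb0_def f_def uu_def rr_def by blast

  have C3raw: "H (inf (rv (allN N (\<lambda>n. Q n 0 S))) f) = H f"
    using V0 unfolding cent_def eH rv_pair f_def by simp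
  have C3: "H (inf (q n) f) = H f" if n: "n < N" for n
  proof -
    have e: "rv (allN N (\<lambda>n. Q n 0 S)) = inf (q n) (rv (allN N (\<lambda>n. Q n 0 S)))"
      unfolding q_def using allN_comp[OF n, of "\<lambda>n. Q n 0 S"] by simp
    have 1: "H f \<le> H (inf (q n) f)" by (rule mono) simp_all
    have 2: "H (inf (q n) f) \<le> H (inf (rv (allN N (\<lambda>n. Q n 0 S))) (inf (q n) f))" by (rule mono) simp_all
    have 3: "H (inf (rv (allN N (\<lambda>n. Q n 0 S))) (inf (q n) f)) = H (inf (rv (allN N (\<lambda>n. Q n 0 S))) f)"
      by (subst (2) e) (simp only: inf_aci inf_idem)
    show ?thesis using 1 2 3 C3raw by linarith
  qed
  have C4: "H (inf (a n) (inf (q n) (inf (inf w0 wb0) (inf uu rr)))) = H (inf (q n) (inf (inf w0 wb0) (inf uu rr)))"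
    if n: "n < N" for n
  proof -
    have "cent (real CARD('f)) M (A n 0 S) (\<lambda>\<omega>. (Q n 0 S \<omega>, Wall K W \<omega>, comps RS {..<m} \<omega>)) = 0"
      using V0 n by blast
    then show ?thesis unfolding cent_def eH rv_pair Wall_split[OF k0] comps_split[OF Ssub]
      unfolding w0_def wb0_def uu_def rr_def q_def a_def by simp
  qed
  have C5: "H (inf w0 (inf f (inf (inf (a 0) ar) uu))) = H (inf f (inf (inf (a 0) ar) uu))"
    using V0 unfolding cent_def eH rv_pair allN_split[OF N0]
    unfolding w0_def f_def uu_def a_def ar_def by simp
  have C7: "H wb0 + H (inf f (inf (inf (a 0) ar) uu)) - H (inf wb0 (inf f (inf (inf (a 0) ar) uu))) = 0"
    using V0 unfolding minf_def eH rv_pair allN_split[OF N0]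
    unfolding wb0_def f_def uu_def a_def ar_def by blast
  have C8: "H rr + H (inf f (inf (inf (a 0) ar) (inf w0 uu))) - H (inf rr (inf f (inf (inf (a 0) ar) (inf w0 uu)))) = 0"
    using V0 unfolding minf_def eH rv_pair allN_split[OF N0]
    unfolding w0_def rr_def f_def uu_def a_def ar_def by blast

  have P: "H (inf w0 (q n)) + H (inf (a n) (q n)) = H (inf w0 (inf (a n) (q n))) + H (q n)" if n: "n < N" for n
  proof -
    obtain S' where S': "S' \<in> adm m u" and eq: "map_pmf (\<lambda>\<omega>. (Q n 0 S \<omega>, A n 0 S \<omega>, Wall K W \<omega>, comps RS {..<m} \<omega>)) M
        = map_pmf (\<lambda>\<omega>. (Q n 1 S' \<omega>, A n 1 S' \<omega>, Wall K W \<omega>, comps RS {..<m} \<omega>)) M"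
      using V0 k1 n by meson
    note V1 = V[OF k1 S']
    define q' where "q' = rv (Q n 1 S')"
    define a' where "a' = rv (A n 1 S')"
    define aa' where "aa' = rv (allN N (\<lambda>n. A n 1 S'))"
    define u' where "u' = rv (comps RS S')"
    have EQs'[simp]: "EQ q'" "EQ a'" "EQ aa'" "EQ u'" by (simp_all add: q'_def a'_def aa'_def u'_def)
    have C3r': "H (inf (rv (allN N (\<lambda>n. Q n 1 S'))) f) = H f"
      using V1 unfolding cent_def eH rv_pair f_def by simp
    have C3': "H (inf q' f) = H f"
    proof -
      have e: "rv (allN N (\<lambda>n. Q n 1 S')) = inf q' (rv (allN N (\<lambda>n. Q n 1 S')))"
        unfolding q'_def using allN_comp[OF n, of "\<lambda>n. Q n 1 S'"] by simp
      have 1: "H f \<le> H (inf q' f)" by (rule mono) simp_all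
      have 2: "H (inf q' f) \<le> H (inf (rv (allN N (\<lambda>n. Q n 1 S'))) (inf q' f))" by (rule mono) simp_all
      have 3: "H (inf (rv (allN N (\<lambda>n. Q n 1 S'))) (inf q' f)) = H (inf (rv (allN N (\<lambda>n. Q n 1 S'))) f)"
        by (subst (2) e) (simp only: inf_aci inf_idem)
      show ?thesis using 1 2 3 C3r' by linarith
    qed
    have C7': "H wb1 + H (inf f (inf aa' u')) - H (inf wb1 (inf f (inf aa' u'))) = 0"
      using V1 unfolding minf_def eH rv_pair unfolding wb1_def f_def aa'_def u'_def by blast
    have aa': "H (inf a' aa') = H aa'"
      unfolding a'_def aa'_def using allN_comp[OF n, of "\<lambda>n. A n 1 S'"] by simp
    have wb1: "H (inf w0 wb1) = H wb1"
      unfolding w0_def wb1_def using Wbar1_w0[OF k1, of W] by simp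
    have t1: "H (inf w0 (q n)) = H (inf w0 q')"
    proof -
      have "ent (real CARD('f)) M (\<lambda>\<omega>. (W 0 \<omega>, Q n 0 S \<omega>)) = ent (real CARD('f)) M (\<lambda>\<omega>. (W 0 \<omega>, Q n 1 S' \<omega>))"
        using ent_map_eq[OF fin b1 eq, of "\<lambda>t. (hd (fst (snd (snd t))), fst t)"] by (simp add: hd_Wall[OF k0])
      then show ?thesis unfolding eH rv_pair w0_def q_def q'_def by simp
    qed
    have t2: "H (inf (a n) (q n)) = H (inf a' q')"
    proof -
      have "ent (real CARD('f)) M (\<lambda>\<omega>. (A n 0 S \<omega>, Q n 0 S \<omega>)) = ent (real CARD('f)) M (\<lambda>\<omega>. (A n 1 S' \<omega>, Q n 1 S' \<omega>))"
        using ent_map_eq[OF fin b1 eq, of "\<lambda>t. (fst (snd t), fst t)"] by simp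
      then show ?thesis unfolding eH rv_pair a_def a'_def q_def q'_def by simp
    qed
    have t3: "H (inf w0 (inf (a n) (q n))) = H (inf w0 (inf a' q'))"
    proof -
      have "ent (real CARD('f)) M (\<lambda>\<omega>. (W 0 \<omega>, A n 0 S \<omega>, Q n 0 S \<omega>)) = ent (real CARD('f)) M (\<lambda>\<omega>. (W 0 \<omega>, A n 1 S' \<omega>, Q n 1 S' \<omega>))"
        using ent_map_eq[OF fin b1 eq, of "\<lambda>t. (hd (fst (snd (snd t))), fst (snd t), fst t)"] by (simp add: hd_Wall[OF k0])
      then show ?thesis unfolding eH rv_pair w0_def a_def a'_def q_def q'_def by simp
    qed
    have t4: "H (q n) = H q'"
    proof -
      have "ent (real CARD('f)) M (\<lambda>\<omega>. Q n 0 S \<omega>) = ent (real CARD('f)) M (\<lambda>\<omega>. Q n 1 S' \<omega>)"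
        using ent_map_eq[OF fin b1 eq, of "\<lambda>t. fst t"] by simp
      then show ?thesis unfolding eH q_def q'_def by simp
    qed
    have s1: "H (inf (inf w0 a') q') + H q' \<le> H (inf w0 q') + H (inf a' q')" by (rule sm) simp_all
    have s2: "0 \<le> H w0 + H q' - H (inf w0 q')" by (rule min) simp_all
    have s3: "H w0 + H (inf a' q') - H (inf w0 (inf a' q')) \<le>
         H (inf w0 wb1) + H (inf (inf a' q') (inf f (inf aa' u'))) - H (inf (inf w0 wb1) (inf (inf a' q') (inf f (inf aa' u'))))"
      by (rule mim) simp_all
    have d1: "H (inf w0 (inf wb1 (inf a' (inf q' (inf f (inf aa' u')))))) = H (inf wb1 (inf a' (inf q' (inf f (inf aa' u')))))"
      by (rule dext) (simp_all add: wb1)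
    have d2: "H (inf a' (inf aa' (inf wb1 (inf q' (inf f u'))))) = H (inf aa' (inf wb1 (inf q' (inf f u'))))"
      by (rule dext) (simp_all add: aa')
    have d3: "H (inf q' (inf f (inf wb1 (inf aa' u')))) = H (inf f (inf wb1 (inf aa' u')))"
      by (rule dext) (simp_all add: C3')
    have d4: "H (inf a' (inf aa' (inf q' (inf f u')))) = H (inf aa' (inf q' (inf f u')))"
      by (rule dext) (simp_all add: aa')
    have d5: "H (inf q' (inf f (inf aa' u'))) = H (inf f (inf aa' u'))"
      by (rule dext) (simp_all add: C3')
    have "H (inf w0 q') + H (inf a' q') = H (inf w0 (inf a' q')) + H q'"
      using s1 s2 s3 d1 d2 d3 d4 d5 C7' wb1 by ((simp only: inf_aci inf_idem)?; linarith?)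
    then show ?thesis using t1 t2 t3 t4 by linarith
  qed

  have B: "H w0 + H (inf f uu) - H (inf w0 (inf f uu)) = 0"
  proof -
    have 1: "H w0 + H (inf f uu) - H (inf w0 (inf f uu)) \<le>
       H (inf w0 wb0) + H (inf (inf f uu) rr) - H (inf (inf w0 wb0) (inf (inf f uu) rr))"
      by (rule mim) simp_all
    have 2: "0 \<le> H w0 + H (inf f uu) - H (inf w0 (inf f uu))" by (rule min) simp_all
    show ?thesis using 1 2 C1 by ((simp only: inf_aci inf_idem)?; linarith?)
  qed
  have C: "H (inf w0 (inf (a 0) (inf f uu))) - H (inf (a 0) (inf f uu)) \<le> H (inf ar (inf f uu)) - H (inf f uu)"
  proof -
    have 1: "H (inf w0 (inf (a 0) (inf f uu))) \<le> H (inf ar (inf w0 (inf (a 0) (inf f uu))))" by (rule mono) simp_all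
    have 2: "H (inf (inf (a 0) ar) (inf f uu)) + H (inf f uu) \<le> H (inf (a 0) (inf f uu)) + H (inf ar (inf f uu))"
      by (rule sm) simp_all
    show ?thesis using 1 2 C5 by ((simp only: inf_aci inf_idem)?; linarith?)
  qed
  have qd: "H (inf (q 0) (inf f z)) = H (inf f z)" if "EQ z" for z
    by (rule dext) (simp_all add: that C3[OF N0])
  have D: "H (inf w0 (inf f uu)) + H (inf (a 0) (inf f uu)) - H (inf w0 (inf (a 0) (inf f uu))) - H (inf f uu) \<le> H uu"
  proof -
    define x where "x = inf (inf w0 wb0) rr"
    have EQx[simp]: "EQ x" by (simp add: x_def)
    have d1: "H (inf (inf w0 (inf f uu)) (q 0)) + H (q 0) \<le> H (inf w0 (q 0)) + H (inf (inf f uu) (q 0))"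
      by (rule sm) simp_all
    have q1: "H (inf (q 0) (inf f uu)) = H (inf f uu)" by (rule qd) simp
    have q2: "H (inf (q 0) (inf f (inf w0 uu))) = H (inf f (inf w0 uu))" by (rule qd) simp
    have q3: "H (inf (q 0) (inf f (inf (a 0) uu))) = H (inf f (inf (a 0) uu))" by (rule qd) simp
    have q4: "H (inf (q 0) (inf f (inf w0 (inf (a 0) uu)))) = H (inf f (inf w0 (inf (a 0) uu)))" by (rule qd) simp
    have q5: "H (inf (q 0) (inf f (inf x uu))) = H (inf f (inf x uu))" by (rule qd) simp
    note P0 = P[OF N0]
    have d4a: "H (inf w0 (inf (a 0) (q 0))) \<le> H (inf uu (inf w0 (inf (a 0) (q 0))))" by (rule mono) simp_all
    have d4b: "H (inf uu (inf (a 0) (q 0))) \<le> H uu + H (inf (a 0) (q 0))" by (rule sub) simp_all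
    have i1: "H (inf (inf x f) (inf w0 (inf uu (inf (a 0) (q 0))))) + H (inf w0 (inf uu (inf (a 0) (q 0))))
       \<le> H (inf x (inf w0 (inf uu (inf (a 0) (q 0))))) + H (inf f (inf w0 (inf uu (inf (a 0) (q 0)))))"
      by (rule sm) simp_all
    have xw: "inf x w0 = x" unfolding x_def by (simp only: inf_aci inf_idem)
    have c4: "H (inf (a 0) (inf (q 0) (inf (inf w0 wb0) (inf uu rr)))) = H (inf (q 0) (inf (inf w0 wb0) (inf uu rr)))"
      by (rule C4[OF N0])
    have c4f: "H (inf (a 0) (inf (inf (q 0) (inf (inf w0 wb0) (inf uu rr))) f)) = H (inf (inf (q 0) (inf (inf w0 wb0) (inf uu rr))) f)"
      by (rule dext) (simp_all add: c4)
    have i2: "H (inf (inf (a 0) f) (inf uu (q 0))) + H (inf uu (q 0)) \<le> H (inf (a 0) (inf uu (q 0))) + H (inf f (inf uu (q 0)))"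
      by (rule sm) simp_all
    have i3: "H (inf (inf x (q 0)) uu) + H uu \<le> H (inf x uu) + H (inf (q 0) uu)" by (rule sm) simp_all
    have i4: "H rr + H (inf f uu) - H (inf rr (inf f uu)) \<le>
       H (inf rr rr) + H (inf (inf f uu) (inf (inf (a 0) ar) w0)) - H (inf (inf rr rr) (inf (inf f uu) (inf (inf (a 0) ar) w0)))"
      by (rule mim) simp_all
    have i5: "0 \<le> H rr + H uu - H (inf rr uu)" by (rule min) simp_all
    have i6: "0 \<le> H (inf w0 wb0) + H (inf rr uu) - H (inf (inf w0 wb0) (inf rr uu))" by (rule min) simp_all
    show ?thesis using d1 q1 q2 q3 q4 q5 P0 d4a d4b i1 c4 c4f i2 i3 i4 i5 i6 C1 C8 unfolding x_def
      by ((simp only: inf_aci inf_idem)?; linarith?)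
  qed

  have aaj: "H (inf (a j) (inf (a 0) ar)) = H (inf (a 0) ar)" if j: "j < N" for j
  proof -
    have "inf (a j) (inf (a 0) ar) = inf (a 0) ar"
      using allN_comp[OF j, of "\<lambda>n. A n 0 S"] allN_split[OF N0, of "\<lambda>n. A n 0 S"]
      unfolding a_def ar_def by simp
    then show ?thesis by simp
  qed
  have E: "H (inf (a j) (inf f uu)) - H (inf f uu) \<le> H (inf uu rr)" if j: "j < N" for j
  proof -
    have qd: "H (inf (q j) (inf f z)) = H (inf f z)" if "EQ z" for z
      by (rule dext) (simp_all add: that C3[OF j])
    have e1: "H (inf (inf (a j) (inf f uu)) (q j)) + H (q j) \<le> H (inf (a j) (q j)) + H (inf (inf f uu) (q j))"
      by (rule sm) simp_all
    have q1: "H (inf (q j) (inf f uu)) = H (inf f uu)" by (rule qd) simp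
    have q2: "H (inf (q j) (inf f (inf (a j) uu))) = H (inf f (inf (a j) uu))" by (rule qd) simp
    have q3: "H (inf (q j) (inf f (inf w0 (inf (inf (a 0) ar) uu)))) = H (inf f (inf w0 (inf (inf (a 0) ar) uu)))" by (rule qd) simp
    have q4: "H (inf (q j) (inf f (inf wb0 (inf w0 (inf (inf (a 0) ar) uu))))) = H (inf f (inf wb0 (inf w0 (inf (inf (a 0) ar) uu))))" by (rule qd) simp
    note Pj = P[OF j]
    have s1: "H (inf (inf wb0 (a j)) (inf w0 (q j))) + H (inf w0 (q j)) \<le> H (inf wb0 (inf w0 (q j))) + H (inf (a j) (inf w0 (q j)))"
      by (rule sm) simp_all
    have s2: "0 \<le> H wb0 + H (inf w0 (q j)) - H (inf wb0 (inf w0 (q j)))" by (rule min) simp_all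
    have s3: "H wb0 + H (inf (a j) (inf (q j) w0)) - H (inf wb0 (inf (a j) (inf (q j) w0))) \<le>
      H (inf wb0 wb0) + H (inf (inf (a j) (inf (q j) w0)) (inf f (inf (inf (a 0) ar) uu)))
        - H (inf (inf wb0 wb0) (inf (inf (a j) (inf (q j) w0)) (inf f (inf (inf (a 0) ar) uu))))"
      by (rule mim) simp_all
    have a1: "H (inf (a j) (inf (inf (a 0) ar) (inf (q j) (inf w0 (inf f uu))))) = H (inf (inf (a 0) ar) (inf (q j) (inf w0 (inf f uu))))"
      by (rule dext) (simp_all add: aaj[OF j])
    have a2: "H (inf (a j) (inf (inf (a 0) ar) (inf wb0 (inf (q j) (inf w0 (inf f uu)))))) = H (inf (inf (a 0) ar) (inf wb0 (inf (q j) (inf w0 (inf f uu)))))"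
      by (rule dext) (simp_all add: aaj[OF j])
    have c5: "H (inf w0 (inf (inf f (inf (inf (a 0) ar) uu)) wb0)) = H (inf (inf f (inf (inf (a 0) ar) uu)) wb0)"
      by (rule dext) (simp_all add: C5)
    have e5a: "H (inf (a j) (inf (inf w0 wb0) (q j))) \<le> H (inf (inf uu rr) (inf (a j) (inf (inf w0 wb0) (q j))))"
      by (rule mono) simp_all
    have e5b: "H (inf (inf uu rr) (inf (inf w0 wb0) (q j))) \<le> H (inf uu rr) + H (inf (inf w0 wb0) (q j))"
      by (rule sub) simp_all
    note c4 = C4[OF j]
    show ?thesis using e1 q1 q2 q3 q4 Pj s1 s2 s3 a1 a2 c5 e5a e5b c4 C5 C7
      by ((simp only: inf_aci inf_idem)?; linarith?)
  qed
  have Esum: "H (inf ar (inf f uu)) - H (inf f uu) \<le> real (N - 1) * H (inf uu rr)"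
  proof -
    have "HH M (real CARD('f)) (inf (rv (\<lambda>\<omega>. map (\<lambda>j. A j 0 S \<omega>) [1..<N])) (inf f uu)) - HH M (real CARD('f)) (inf f uu)
      \<le> real (length [1..<N]) * H (inf uu rr)"
      by (rule sub_list[OF fin b1]) (use E in \<open>auto simp: a_def H_def\<close>)
    then show ?thesis unfolding ar_def H_def by simp
  qed
  obtain K' where K': "K = Suc K'" using k0 by (cases K) auto
  have "map_pmf (W 0) M = map_pmf hd (map_pmf (Wall K W) M)"
    by (simp add: map_pmf_comp hd_Wall[OF k0])
  also have "\<dots> = pmf_of_set {w :: 'f list. length w = L}"
    by (simp only: assms(5)) (simp only: K' map_hd_unif)
  finally have mp: "map_pmf (W 0) M = pmf_of_set {w :: 'f list. length w = L}" .
  have "ent (real CARD('f)) M (W 0) = real L" by (rule ent_unif[OF _ mp]) (use two in simp)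
  then have HL: "H w0 = real L" unfolding w0_def eH[symmetric] .
  have Hu: "H uu = ent (real CARD('f)) M (comps RS S)" unfolding uu_def eH ..
  have Hr: "H (inf uu rr) = ent (real CARD('f)) M (comps RS {..<m})"
    unfolding uu_def rr_def eH comps_split[OF Ssub] ..
  have main: "real L \<le> ent (real CARD('f)) M (comps RS S) + real (N - 1) * ent (real CARD('f)) M (comps RS {..<m})"
    unfolding Hu[symmetric] Hr[symmetric] using B C D Esum HL by linarith
  define x where "x = ent (real CARD('f)) M (comps RS S)"
  define y where "y = ent (real CARD('f)) M (comps RS {..<m})"
  have Lp: "0 < real L" using assms(3) by simp
  have Np: "1 < real N" using assms(1) by simp
  have m2: "real L \<le> x + (real N - 1) * y" using main unfolding x_def y_def using assms(1) by (simp add: of_nat_diff)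
  have "real N / (real N - 1) * (x / real L) + real N * (y / real L) = real N / (real N - 1) * ((x + (real N - 1) * y) / real L)"
    using Np Lp by (simp add: field_simps)
  also have "\<dots> \<ge> real N / (real N - 1) * 1"
    using m2 Np Lp by (intro mult_left_mono) (simp_all add: field_simps)
  finally show ?thesis unfolding x_def y_def by simp
qed


end
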